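(* Let $X$ be an $n$-dimensional real normed space and let $Y \subseteq X$ be a $k$-dimensional subspace, where $1 \leq k \leq n-1$. Suppose that $x_0 \in X \setminus Y$ and there exists a minimal $I$-set for $Y$ with respect to $x_0$ of cardinality $l$. Then $\dim P_Y(x_0) \leq k-l+1$.
   Context: $P_Y(x)=\{y\in Y:\|x-y\|=\mathrm{dist}(x,Y)\}$ is the (convex) set of best approximations of $x$ in $Y$, and $\dim$ denotes affine dimension. For $x_0\in X\setminus Y$, a set of functionals $\{f_1,\dots,f_l\}\subseteq \mathrm{ext}\,B_{X^*}$ (extreme points of the dual unit ball) is an $I$-set for $Y$ with respect to $x_0$ if there exist $y_0\in P_Y(x_0)$ and positive reals $\alpha_1,\dots,\alpha_l$ with $\sum_i\alpha_i=1$ such that $f_i(x_0-y_0)=\|x_0-y_0\|$ for all $i$ and $\sum_{i=1}^l\alpha_i f_i(y)=0$ for all $y\in Y$. An $I$-set is minimal if no proper subset of it is an $I$-set for $Y$ with respect to $x_0$. *)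

theory Defs
  imports "HOL-Analysis.Analysis"
begin

text \<open>Affine dimension for arbitrary real vector spaces (the library's aff_dim
  is restricted to euclidean_space); same definition as the library's.\<close>
definition gen_aff_dim :: "('a::real_vector) set \<Rightarrow> int"
  where "gen_aff_dim V =
  (SOME d :: int.
    \<exists>B. affine hull B = affine hull V \<and> \<not> affine_dependent B \<and> of_nat (card B) = d + 1)"

definition best_approx :: "'a::real_normed_vector set \<Rightarrow> 'a \<Rightarrow> 'a set"
  where "best_approx Y x = {y \<in> Y. norm (x - y) = infdist x Y}"

definition is_I_set :: "'a::real_normed_vector set \<Rightarrow> 'a \<Rightarrow> ('a \<Rightarrow>\<^sub>L real) set \<Rightarrow> bool"
  where "is_I_set Y x0 F \<longleftrightarrow>
    finite F \<and> F \<noteq> {} \<and> (\<forall>f\<in>F. f extreme_point_of (cball 0 1)) \<and>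
    (\<exists>y0 \<in> best_approx Y x0. \<exists>\<alpha> :: ('a \<Rightarrow>\<^sub>L real) \<Rightarrow> real.
        (\<forall>f\<in>F. \<alpha> f > 0) \<and> (\<Sum>f\<in>F. \<alpha> f) = 1 \<and>
        (\<forall>f\<in>F. blinfun_apply f (x0 - y0) = norm (x0 - y0)) \<and>
        (\<forall>y\<in>Y. (\<Sum>f\<in>F. \<alpha> f * blinfun_apply f y) = 0))"

definition is_minimal_I_set :: "'a::real_normed_vector set \<Rightarrow> 'a \<Rightarrow> ('a \<Rightarrow>\<^sub>L real) set \<Rightarrow> bool"
  where "is_minimal_I_set Y x0 F \<longleftrightarrow>
    is_I_set Y x0 F \<and> (\<forall>G. G \<subset> F \<longrightarrow> \<not> is_I_set Y x0 G)"

end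

theory Submission
  imports Defs
begin

lemmas rv_raw = dependent_raw_def subspace_raw_def span_raw_def dim_raw_def

lemma fd_exists:
  assumes "dim (UNIV::'a::real_vector set) > 0"
  shows "\<exists>B. finite_dimensional_vector_space (scaleR :: real \<Rightarrow> 'a \<Rightarrow> 'a) B"
proof -
  obtain B :: "'a set" where B: "independent B" "UNIV \<subseteq> span B" "card B = dim (UNIV::'a set)"
    using basis_exists[of "UNIV::'a set"] by blast
  then have "finite B" using assms card.infinite by fastforce
  then show ?thesis using B
    by (intro exI[of _ B]) (unfold_locales, auto simp: rv_raw)
qed

lemma dim_psub:
  assumes "finite_dimensional_vector_space (scaleR :: real \<Rightarrow> 'a::real_vector \<Rightarrow> 'a) Bs"
    and "subspace S" "subspace T" "S \<subset> (T::'a set)"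
  shows "dim S < dim T"
proof -
  interpret fd: finite_dimensional_vector_space "scaleR :: real \<Rightarrow> 'a \<Rightarrow> 'a" Bs by fact
  have "span S = S" "span T = T" using assms by (simp_all add: span_eq_iff)
  then show ?thesis using fd.dim_psubset[of S T] assms unfolding rv_raw by simp
qed

lemma indep_le:
  assumes "finite_dimensional_vector_space (scaleR :: real \<Rightarrow> 'a::real_vector \<Rightarrow> 'a) Bs"
    and "C \<subseteq> (S::'a set)" "independent C"
  shows "card C \<le> dim S"
proof -
  interpret fd: finite_dimensional_vector_space "scaleR :: real \<Rightarrow> 'a \<Rightarrow> 'a" Bs by fact
  show ?thesis using fd.independent_card_le_dim assms by (simp add: rv_raw)
qed


lemma vanish_comb:
  fixes Y :: "'a::real_normed_vector set" and G :: "('a \<Rightarrow>\<^sub>L real) set"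
  assumes "subspace Y" "finite G"
    and "\<forall>y\<in>Y. (\<forall>h\<in>G. blinfun_apply h y = 0) \<longrightarrow> blinfun_apply g y = 0"
  shows "\<exists>c. \<forall>y\<in>Y. blinfun_apply g y = (\<Sum>h\<in>G. c h * blinfun_apply h y)"
  using assms(2,3)
proof (induction G arbitrary: g rule: finite_induct)
  case empty
  then show ?case by auto
next
  case (insert h G)
  show ?case
  proof (cases "\<forall>y\<in>Y. (\<forall>h'\<in>G. blinfun_apply h' y = 0) \<longrightarrow> blinfun_apply h y = 0")
    case True
    then have "\<forall>y\<in>Y. (\<forall>h'\<in>G. blinfun_apply h' y = 0) \<longrightarrow> blinfun_apply g y = 0" using insert.prems by auto
    then obtain c where c: "\<forall>y\<in>Y. blinfun_apply g y = (\<Sum>h\<in>G. c h * blinfun_apply h y)" using insert.IH by blast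
    have "\<forall>y\<in>Y. blinfun_apply g y = (\<Sum>h'\<in>insert h G. (c(h:=0)) h' * blinfun_apply h' y)"
    proof
      fix y assume "y \<in> Y"
      have "(\<Sum>h'\<in>insert h G. (c(h:=0)) h' * blinfun_apply h' y) = (\<Sum>h'\<in>G. (c(h:=0)) h' * blinfun_apply h' y)"
        using insert.hyps by simp
      also have "\<dots> = (\<Sum>h'\<in>G. c h' * blinfun_apply h' y)"
        using insert.hyps by (intro sum.cong) auto
      finally show "blinfun_apply g y = (\<Sum>h'\<in>insert h G. (c(h:=0)) h' * blinfun_apply h' y)" using c \<open>y \<in> Y\<close> by simp
    qed
    then show ?thesis by blast
  next
    case False
    then obtain z where z: "z \<in> Y" "\<forall>h'\<in>G. blinfun_apply h' z = 0" "blinfun_apply h z \<noteq> 0" by blast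
    define w where "w = (1 / blinfun_apply h z) *\<^sub>R z"
    have wY: "w \<in> Y" using z assms(1) unfolding w_def by (simp add: subspace_scale)
    have hw: "blinfun_apply h w = 1" using z unfolding w_def by (simp add: blinfun.scaleR_right)
    have wG: "\<forall>h'\<in>G. blinfun_apply h' w = 0" using z unfolding w_def by (simp add: blinfun.scaleR_right)
    define g' where "g' = g - blinfun_apply g w *\<^sub>R h"
    have "\<forall>y\<in>Y. (\<forall>h'\<in>G. blinfun_apply h' y = 0) \<longrightarrow> blinfun_apply g' y = 0"
    proof (intro ballI impI)
      fix y assume y: "y \<in> Y" "\<forall>h'\<in>G. blinfun_apply h' y = 0"
      define u where "u = y - blinfun_apply h y *\<^sub>R w"
      have "u \<in> Y" using y wY assms(1) unfolding u_def by (simp add: subspace_diff subspace_scale)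
      moreover have "\<forall>h'\<in>insert h G. blinfun_apply h' u = 0"
        using y wG hw unfolding u_def by (auto simp: blinfun.diff_right blinfun.scaleR_right)
      ultimately have "blinfun_apply g u = 0" using insert.prems by blast
      then have "blinfun_apply g y = blinfun_apply h y * blinfun_apply g w" unfolding u_def by (simp add: blinfun.diff_right blinfun.scaleR_right)
      then show "blinfun_apply g' y = 0" unfolding g'_def by (simp add: blinfun.diff_left blinfun.scaleR_left)
    qed
    then obtain c where c: "\<forall>y\<in>Y. blinfun_apply g' y = (\<Sum>h\<in>G. c h * blinfun_apply h y)" using insert.IH by blast
    have "\<forall>y\<in>Y. blinfun_apply g y = (\<Sum>h'\<in>insert h G. (c(h:=blinfun_apply g w)) h' * blinfun_apply h' y)"
    proof
      fix y assume "y \<in> Y"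
      have "(\<Sum>h'\<in>insert h G. (c(h:=blinfun_apply g w)) h' * blinfun_apply h' y) = blinfun_apply g w * blinfun_apply h y + (\<Sum>h'\<in>G. (c(h:=blinfun_apply g w)) h' * blinfun_apply h' y)"
        using insert.hyps by simp
      also have "(\<Sum>h'\<in>G. (c(h:=blinfun_apply g w)) h' * blinfun_apply h' y) = (\<Sum>h'\<in>G. c h' * blinfun_apply h' y)"
        using insert.hyps by (intro sum.cong) auto
      finally show "blinfun_apply g y = (\<Sum>h'\<in>insert h G. (c(h:=blinfun_apply g w)) h' * blinfun_apply h' y)"
        using c[rule_format, OF \<open>y \<in> Y\<close>] unfolding g'_def by (simp add: blinfun.diff_left blinfun.scaleR_left algebra_simps)
    qed
    then show ?thesis by blast
  qed
qed


lemma reduce_pos: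
  fixes F :: "'b set" and Y :: "'a set" and \<phi> :: "'b \<Rightarrow> 'a \<Rightarrow> real"
  assumes "finite F" "f0 \<in> F" "\<forall>f\<in>F. \<alpha> f > 0" "\<forall>y\<in>Y. (\<Sum>f\<in>F. \<alpha> f * \<phi> f y) = 0"
    "\<forall>y\<in>Y. (\<Sum>f\<in>F. \<beta> f * \<phi> f y) = 0" "\<beta> f0 = 0" "g \<in> F" "\<beta> g > 0"
  shows "\<exists>G \<gamma>. G \<subset> F \<and> G \<noteq> {} \<and> (\<forall>f\<in>G. \<gamma> f > 0) \<and> sum \<gamma> G = 1 \<and>
     (\<forall>y\<in>Y. (\<Sum>f\<in>G. \<gamma> f * \<phi> f y) = 0)"
proof -
  define P where "P = {f\<in>F. \<beta> f > 0}"
  have fP: "finite P" "P \<noteq> {}" using assms unfolding P_def by auto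
  define t where "t = Min ((\<lambda>f. \<alpha> f / \<beta> f) ` P)"
  obtain fs where fs: "fs \<in> P" "t = \<alpha> fs / \<beta> fs"
  proof -
    have "t \<in> (\<lambda>f. \<alpha> f / \<beta> f) ` P"
      unfolding t_def using fP by (intro Min_in) auto
    then show ?thesis using that by blast
  qed
  have tpos: "t > 0" using fs assms(3) unfolding P_def by auto
  have tle: "\<And>f. f \<in> P \<Longrightarrow> t \<le> \<alpha> f / \<beta> f" using fP unfolding t_def by auto
  define \<delta> where "\<delta> f = \<alpha> f - t * \<beta> f" for f
  have dnn: "\<delta> f \<ge> 0" if "f \<in> F" for f
  proof (cases "\<beta> f > 0")
    case True
    then have "t \<le> \<alpha> f / \<beta> f" using tle that unfolding P_def by auto
    then show ?thesis using True unfolding \<delta>_def by (simp add: field_simps)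
  next
    case False
    then show ?thesis using tpos assms(3) that unfolding \<delta>_def
      by (smt (verit) mult_nonneg_nonpos)
  qed
  have d0: "\<delta> fs = 0" using fs unfolding \<delta>_def P_def by auto
  have df0: "\<delta> f0 > 0" using assms unfolding \<delta>_def by auto
  define G where "G = {f\<in>F. \<delta> f > 0}"
  have GF: "G \<subset> F"
  proof -
    have "fs \<in> F" "fs \<notin> G" using d0 fs unfolding G_def P_def by auto
    then show ?thesis unfolding G_def by blast
  qed
  have Gne: "f0 \<in> G" using df0 assms(2) unfolding G_def by auto
  have fG: "finite G" using GF assms(1) finite_subset by auto
  define s where "s = sum \<delta> G"
  have "\<delta> f0 \<le> s" unfolding s_def using Gne fG by (intro member_le_sum) (auto simp: G_def)
  then have spos: "s > 0" using df0 by simp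
  define \<gamma> where "\<gamma> f = \<delta> f / s" for f
  have "\<forall>f\<in>G. \<gamma> f > 0" unfolding \<gamma>_def G_def using spos by auto
  moreover have "sum \<gamma> G = 1" unfolding \<gamma>_def s_def using spos s_def
    by (simp add: sum_divide_distrib[symmetric])
  moreover have "\<forall>y\<in>Y. (\<Sum>f\<in>G. \<gamma> f * \<phi> f y) = 0"
  proof
    fix y assume y: "y \<in> Y"
    have "(\<Sum>f\<in>G. \<delta> f * \<phi> f y) = (\<Sum>f\<in>F. \<delta> f * \<phi> f y)"
    proof (rule sum.mono_neutral_left)
      show "finite F" by fact
      show "G \<subseteq> F" using GF by auto
      show "\<forall>i\<in>F - G. \<delta> i * \<phi> i y = 0" using dnn unfolding G_def by force
    qed
    also have "\<dots> = (\<Sum>f\<in>F. \<alpha> f * \<phi> f y) - t * (\<Sum>f\<in>F. \<beta> f * \<phi> f y)"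
      unfolding \<delta>_def by (simp add: algebra_simps sum_subtractf sum_distrib_left)
    also have "\<dots> = 0" using assms(4,5) y by simp
    finally have "(\<Sum>f\<in>G. \<delta> f * \<phi> f y) = 0" .
    then show "(\<Sum>f\<in>G. \<gamma> f * \<phi> f y) = 0"
      unfolding \<gamma>_def by (simp add: sum_divide_distrib[symmetric])
  qed
  ultimately show ?thesis using GF Gne by blast
qed

lemma reduce:
  fixes F :: "'b set" and Y :: "'a set" and \<phi> :: "'b \<Rightarrow> 'a \<Rightarrow> real"
  assumes "finite F" "f0 \<in> F" "\<forall>f\<in>F. \<alpha> f > 0" "\<forall>y\<in>Y. (\<Sum>f\<in>F. \<alpha> f * \<phi> f y) = 0"
    "\<forall>y\<in>Y. (\<Sum>f\<in>F. \<beta> f * \<phi> f y) = 0" "\<beta> f0 = 0" "g \<in> F" "\<beta> g \<noteq> 0"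
  shows "\<exists>G \<gamma>. G \<subset> F \<and> G \<noteq> {} \<and> (\<forall>f\<in>G. \<gamma> f > 0) \<and> sum \<gamma> G = 1 \<and>
     (\<forall>y\<in>Y. (\<Sum>f\<in>G. \<gamma> f * \<phi> f y) = 0)"
proof (cases "\<beta> g > 0")
  case True
  then show ?thesis using reduce_pos[OF assms(1-7)] by blast
next
  case False
  have "\<forall>y\<in>Y. (\<Sum>f\<in>F. (- \<beta> f) * \<phi> f y) = 0" using assms(5) by (simp add: sum_negf)
  moreover have "- \<beta> g > 0" using False assms(8) by simp
  ultimately show ?thesis using reduce_pos[OF assms(1-4), of "\<lambda>f. - \<beta> f"] assms(6,7) by simp
qed

lemma subspace_K:
  fixes Y :: "'a::real_normed_vector set" and G :: "('a \<Rightarrow>\<^sub>L real) set"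
  assumes "subspace Y"
  shows "subspace {y\<in>Y. \<forall>h\<in>G. blinfun_apply h y = 0}"
  using assms unfolding subspace_def
  by (auto simp: blinfun.add_right blinfun.scaleR_right)

lemma gad_le:
  fixes P T :: "'a::real_vector set"
  assumes fd: "finite_dimensional_vector_space (scaleR :: real \<Rightarrow> 'a \<Rightarrow> 'a) Bs"
    and T: "subspace T" and PT: "\<forall>y\<in>P. y - y0 \<in> T"
  shows "gen_aff_dim P \<le> int (dim T)"
proof -
  define Q where "Q d = (\<exists>B. affine hull B = affine hull P \<and> \<not> affine_dependent B \<and> int (card B) = d + 1)" for d
  obtain B0 where "B0 \<subseteq> P" "\<not> affine_dependent B0" "affine hull P = affine hull B0"
    using affine_basis_exists[of P] by blast
  then have "Q (int (card B0) - 1)" unfolding Q_def by auto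
  then have "Q (SOME d. Q d)" by (rule someI)
  moreover have "gen_aff_dim P = (SOME d. Q d)" unfolding gen_aff_dim_def Q_def by (rule refl)
  ultimately have "Q (gen_aff_dim P)" by simp
  then obtain B where B: "affine hull B = affine hull P" "\<not> affine_dependent B"
    "int (card B) = gen_aff_dim P + 1"
    unfolding Q_def by blast
  define A where "A = {x. x - y0 \<in> T}"
  have "affine A" unfolding affine_def A_def
  proof (intro allI impI ballI, simp)
    fix x y :: 'a and u v :: real
    assume "x - y0 \<in> T" "y - y0 \<in> T" "u + v = 1"
    have "u *\<^sub>R (x - y0) + v *\<^sub>R (y - y0) = u *\<^sub>R x + v *\<^sub>R y - (u + v) *\<^sub>R y0"
      by (simp add: algebra_simps)
    then have "u *\<^sub>R x + v *\<^sub>R y - y0 = u *\<^sub>R (x - y0) + v *\<^sub>R (y - y0)"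
      using \<open>u + v = 1\<close> by simp
    then show "u *\<^sub>R x + v *\<^sub>R y - y0 \<in> T"
      using T \<open>x - y0 \<in> T\<close> \<open>y - y0 \<in> T\<close> by (simp add: subspace_add subspace_scale)
  qed
  moreover have "P \<subseteq> A" using PT unfolding A_def by auto
  ultimately have hPA: "affine hull P \<subseteq> A" by (intro hull_minimal)
  have "B \<subseteq> affine hull B" by (rule hull_subset)
  then have BA: "B \<subseteq> A" using hPA unfolding B(1) by (rule subset_trans)
  show ?thesis
  proof (cases "B = {}")
    case True
    then show ?thesis using B(3) by simp
  next
    case False
    then obtain b where b: "b \<in> B" by blast
    define C where "C = (\<lambda>x. -b + x) ` (B - {b})"
    have indC: "independent C" using affine_dependent_iff_dependent2[OF b] B(2) unfolding C_def by simp
    have "C \<subseteq> T"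
    proof
      fix c assume "c \<in> C"
      then obtain x where x: "x \<in> B" "c = -b + x" unfolding C_def by auto
      have "x - y0 \<in> T" "b - y0 \<in> T" using BA x b unfolding A_def by auto
      then have "(x - y0) - (b - y0) \<in> T" by (rule subspace_diff[OF T])
      moreover have "(x - y0) - (b - y0) = c" using x by (simp add: algebra_simps)
      ultimately show "c \<in> T" by simp
    qed
    then have "card C \<le> dim T" using indep_le[OF fd _ indC] by blast
    moreover have "card C = card (B - {b})" unfolding C_def by (intro card_image) (auto simp: inj_on_def)
    moreover have "card B \<le> card (B - {b}) + 1"
      using b by (cases "finite B") (auto simp: card_Diff_singleton)
    ultimately show ?thesis using B(3) by linarith
  qed
qed

theorem mainTheorem12:
  fixes Y :: "'a::real_normed_vector set" and x0 :: 'a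
    and n k l :: nat and F :: "('a \<Rightarrow>\<^sub>L real) set"
  assumes "dim (UNIV :: 'a set) = n"
    and "subspace Y" and "dim Y = k"
    and "1 \<le> k" and "k \<le> n - 1"
    and "x0 \<notin> Y"
    and "is_minimal_I_set Y x0 F" and "card F = l"
  shows "gen_aff_dim (best_approx Y x0) \<le> int k - int l + 1"
proof -
  have "dim (UNIV :: 'a set) > 0" using assms(1,4,5) by simp
  then obtain Bs where fd: "finite_dimensional_vector_space (scaleR :: real \<Rightarrow> 'a \<Rightarrow> 'a) Bs"
    using fd_exists by blast
  have IF: "is_I_set Y x0 F" and minF: "\<forall>G. G \<subset> F \<longrightarrow> \<not> is_I_set Y x0 G"
    using assms(7) unfolding is_minimal_I_set_def by auto
  then have finF: "finite F" and neF: "F \<noteq> {}" and extF: "\<forall>f\<in>F. f extreme_point_of (cball 0 1)"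
    unfolding is_I_set_def by auto
  obtain y0 \<alpha> where y0: "y0 \<in> best_approx Y x0" and apos: "\<forall>f\<in>F. \<alpha> f > 0"
    and asum: "(\<Sum>f\<in>F. \<alpha> f) = 1"
    and fnorm: "\<forall>f\<in>F. blinfun_apply f (x0 - y0) = norm (x0 - y0)"
    and aY: "\<forall>y\<in>Y. (\<Sum>f\<in>F. \<alpha> f * blinfun_apply f y) = 0"
    using IF unfolding is_I_set_def by blast
  obtain f0 where f0: "f0 \<in> F" using neF by blast
  have noI: False if G: "G \<subset> F" "G \<noteq> {}" "\<forall>f\<in>G. \<gamma> f > 0" "sum \<gamma> G = 1"
      "\<forall>y\<in>Y. (\<Sum>f\<in>G. \<gamma> f * blinfun_apply f y) = 0" for G \<gamma>
  proof -
    have "finite G" using G(1) finF finite_subset by auto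
    moreover have "\<forall>f\<in>G. f extreme_point_of (cball 0 1)" using G(1) extF by blast
    moreover have "\<forall>f\<in>G. blinfun_apply f (x0 - y0) = norm (x0 - y0)" using G(1) fnorm by blast
    ultimately have "is_I_set Y x0 G" unfolding is_I_set_def
      using G(2-5) y0 by (intro conjI bexI[OF _ y0] exI[of _ \<gamma>]) simp_all
    then show False using minF G(1) by blast
  qed
  define K where "K (G::('a \<Rightarrow>\<^sub>L real) set) = {y\<in>Y. \<forall>h\<in>G. blinfun_apply h y = 0}" for G
  have Ksub: "subspace (K G)" for G unfolding K_def by (rule subspace_K[OF assms(2)])
  have nonvan: "\<exists>y\<in>K G. blinfun_apply g y \<noteq> 0"
    if G: "G \<subseteq> F - {f0}" "g \<in> F - {f0}" "g \<notin> G" for G g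
  proof (rule ccontr)
    assume "\<not> ?thesis"
    then have "\<forall>y\<in>Y. (\<forall>h\<in>G. blinfun_apply h y = 0) \<longrightarrow> blinfun_apply g y = 0"
      unfolding K_def by auto
    moreover have finG: "finite G" using G finF finite_subset by blast
    ultimately obtain c where c: "\<forall>y\<in>Y. blinfun_apply g y = (\<Sum>h\<in>G. c h * blinfun_apply h y)"
      using vanish_comb[OF assms(2)] by blast
    define \<beta> where "\<beta> f = (if f = g then 1 else if f \<in> G then - c f else 0)" for f
    have b1: "\<forall>y\<in>Y. (\<Sum>f\<in>F. \<beta> f * blinfun_apply f y) = 0"
    proof
      fix y assume y: "y \<in> Y"
      have "(\<Sum>f\<in>F. \<beta> f * blinfun_apply f y) =
          (\<Sum>f\<in>F. (if f = g then blinfun_apply f y else 0) - (if f \<in> G then c f * blinfun_apply f y else 0))"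
        unfolding \<beta>_def using G(3) by (intro sum.cong) auto
      also have "\<dots> = blinfun_apply g y - (\<Sum>f\<in>G. c f * blinfun_apply f y)"
      proof -
        have "F \<inter> G = G" using G(1) by auto
        then show ?thesis using G(2) finF
          by (simp add: sum_subtractf sum.inter_restrict[symmetric] sum.delta)
      qed
      also have "\<dots> = 0" using c y by simp
      finally show "(\<Sum>f\<in>F. \<beta> f * blinfun_apply f y) = 0" .
    qed
    have b2: "\<beta> f0 = 0" using G unfolding \<beta>_def by auto
    have b3: "\<beta> g \<noteq> 0" unfolding \<beta>_def by simp
    have gF: "g \<in> F" using G(2) by simp
    obtain G' \<gamma> where "G' \<subset> F" "G' \<noteq> {}" "\<forall>f\<in>G'. \<gamma> f > 0" "sum \<gamma> G' = 1"
      "\<forall>y\<in>Y. (\<Sum>f\<in>G'. \<gamma> f * blinfun_apply f y) = 0"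
      using reduce[OF finF f0 apos aY b1 b2 gF b3] by blast
    then show False by (rule noI)
  qed
  have dimK: "G \<subseteq> F - {f0} \<Longrightarrow> dim (K G) + card G \<le> k" for G
  proof -
    assume GF: "G \<subseteq> F - {f0}"
    have "finite G" using GF finF finite_subset by blast
    then show ?thesis using GF
    proof (induction G rule: finite_induct)
      case empty
      have "K {} = Y" unfolding K_def by auto
      then show ?case using assms(3) by simp
    next
      case (insert g G)
      have "K (insert g G) \<subset> K G"
      proof
        show "K (insert g G) \<subseteq> K G" unfolding K_def by auto
        obtain y where "y \<in> K G" "blinfun_apply g y \<noteq> 0"
          using nonvan[of G g] insert by auto
        then show "K (insert g G) \<noteq> K G" unfolding K_def by auto
      qed
      then have "dim (K (insert g G)) < dim (K G)" using dim_psub[OF fd Ksub Ksub] by blast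
      moreover have "dim (K G) + card G \<le> k" using insert by auto
      ultimately show ?case using insert.hyps by simp
    qed
  qed
  define T where "T = K (F - {f0})"
  have dT: "dim T + (l - 1) \<le> k" using dimK[of "F - {f0}"] assms(8) finF f0 unfolding T_def
    by (simp add: card_Diff_singleton)
  have "card F > 0" using finF neF by (simp add: card_gt_0_iff)
  then have l1: "l \<ge> 1" using assms(8) by simp
  have PT: "\<forall>y\<in>best_approx Y x0. y - y0 \<in> T"
  proof
    fix y assume y: "y \<in> best_approx Y x0"
    have yY: "y \<in> Y" and y0Y: "y0 \<in> Y" using y y0 unfolding best_approx_def by auto
    have neq: "norm (x0 - y) = norm (x0 - y0)" using y y0 unfolding best_approx_def by auto
    have dY: "y - y0 \<in> Y" using yY y0Y assms(2) by (simp add: subspace_diff)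
    have nn: "blinfun_apply f (y - y0) \<ge> 0" if f: "f \<in> F" for f
    proof -
      have "norm f \<le> 1" using extF f unfolding extreme_point_of_def by auto
      then have "blinfun_apply f (x0 - y) \<le> norm (x0 - y)"
      proof -
        have "norm f * norm (x0 - y) \<le> 1 * norm (x0 - y)"
          using \<open>norm f \<le> 1\<close> by (intro mult_right_mono) auto
        then show ?thesis using norm_blinfun[of f "x0 - y"] by simp
      qed
      moreover have "blinfun_apply f (x0 - y) = blinfun_apply f (x0 - y0) - blinfun_apply f (y - y0)"
        by (simp add: blinfun.diff_right)
      ultimately show ?thesis using fnorm f neq by simp
    qed
    have "(\<Sum>f\<in>F. \<alpha> f * blinfun_apply f (y - y0)) = 0" using aY dY by blast
    moreover have "0 \<le> \<alpha> f * blinfun_apply f (y - y0)" if "f \<in> F" for f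
      by (rule mult_nonneg_nonneg[OF less_imp_le[OF bspec[OF apos that]] nn[OF that]])
    ultimately have z: "\<forall>f\<in>F. \<alpha> f * blinfun_apply f (y - y0) = 0"
      using sum_nonneg_eq_0_iff[OF finF, of "\<lambda>f. \<alpha> f * blinfun_apply f (y - y0)"] by blast
    have "\<forall>f\<in>F. blinfun_apply f (y - y0) = 0"
    proof
      fix f assume "f \<in> F"
      then have "\<alpha> f \<noteq> 0" "\<alpha> f * blinfun_apply f (y - y0) = 0" using apos z by auto
      then show "blinfun_apply f (y - y0) = 0" by simp
    qed
    then show "y - y0 \<in> T" unfolding T_def K_def using dY by auto
  qed
  have "gen_aff_dim (best_approx Y x0) \<le> int (dim T)"
    using gad_le[OF fd _ PT] Ksub unfolding T_def by blast
  also have "\<dots> \<le> int k - int l + 1" using dT l1 by linarith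
  finally show ?thesis .
qed

end
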